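(* In the consistent-read iteration defined in the context, for any step size $\beta\in\mathbb{R}$, any deterministic $x_0$, any integer $\tau\ge0$ and any deterministic $k(j)$ with $j-\tau\le k(j)\le j$, we have for every $j\ge0$ \[E_{j+1}\ge\Big(1-\frac{\lambda_{\max}}{n}\Big)E_j.\]
   Context: Let $n\ge2$ and let $A\in\mathbb{R}^{n\times n}$ be symmetric positive definite with all diagonal entries equal to $1$; let $b\in\mathbb{R}^n$ and $x^\star=A^{-1}b$. Let $\lambda_{\max}$ be the largest eigenvalue of $A$. Write $(x,y)_A=y^TAx$ and $\|x\|_A=\sqrt{(x,x)_A}$; $e^{(1)},\dots,e^{(n)}$ are the standard basis vectors. Consistent-read iteration: let $d_0,d_1,\dots$ be i.i.d. random vectors, each uniformly distributed on $\{e^{(1)},\dots,e^{(n)}\}$; let $\tau\ge0$ be an integer and $k(0),k(1),\dots$ deterministic integers with $j-\tau\le k(j)\le j$; given $x_0\in\mathbb{R}^n$ and a step size $\beta$, define for $j\ge0$ \[\gamma_j=(x^\star-x_{k(j)},d_j)_A,\qquad x_{j+1}=x_j+\beta\gamma_jd_j.\] Define $E_m=\mathbb{E}[\|x_m-x^\star\|_A^2]$. *)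

theory Defs
  imports "HOL-Analysis.Analysis" "HOL-Probability.Probability"
begin

definition A_inner :: "real^'n^'n \<Rightarrow> real^'n \<Rightarrow> real^'n \<Rightarrow> real" where
  "A_inner A x y = y \<bullet> (A *v x)"

definition is_eigenvalue :: "real^'n^'n \<Rightarrow> real \<Rightarrow> bool" where
  "is_eigenvalue A l \<longleftrightarrow> (\<exists>v. v \<noteq> 0 \<and> A *v v = l *\<^sub>R v)"

definition lambda_max :: "real^'n^'n \<Rightarrow> real" where
  "lambda_max A = Max {l. is_eigenvalue A l}"

text \<open>Consistent-read iteration for a fixed realisation d of the random directions:
  d j is the index of the basis vector d_j = e^(d j). The min is vacuous under the
  standing hypothesis k j \<le> j; it only makes the recursion total.\<close>
fun cr_iter :: "real^'n^'n \<Rightarrow> real^'n \<Rightarrow> real \<Rightarrow> real^'n \<Rightarrow> (nat \<Rightarrow> nat)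
                 \<Rightarrow> (nat \<Rightarrow> 'n) \<Rightarrow> nat \<Rightarrow> real^'n" where
  "cr_iter A b \<beta> x0 k d 0 = x0"
| "cr_iter A b \<beta> x0 k d (Suc j) =
     cr_iter A b \<beta> x0 k d j
     + (\<beta> * A_inner A (matrix_inv A *v b - cr_iter A b \<beta> x0 k d (min (k j) j)) (axis (d j) 1))
       *\<^sub>R axis (d j) 1"

text \<open>E_m = E[ ||x_m - x*||_A^2 ], where d_0,...,d_{m-1} are i.i.d. uniform on the
  standard basis (x_m only depends on these).\<close>
definition cr_err :: "real^'n^'n \<Rightarrow> real^'n \<Rightarrow> real \<Rightarrow> real^'n \<Rightarrow> (nat \<Rightarrow> nat) \<Rightarrow> nat \<Rightarrow> real" where
  "cr_err A b \<beta> x0 k m =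
     measure_pmf.expectation (Pi_pmf {..<m} undefined (\<lambda>_. pmf_of_set (UNIV :: 'n set)))
       (\<lambda>d. let e = cr_iter A b \<beta> x0 k d m - matrix_inv A *v b in A_inner A e e)"

end

theory Submission
  imports Defs
begin

lemma sym_dot:
  fixes A :: "real^'n^'n"
  assumes "transpose A = A"
  shows "x \<bullet> (A *v y) = y \<bullet> (A *v x)"
  by (metis assms dot_lmul_matrix inner_commute vector_transpose_matrix)

lemma quad_lin:
  fixes a b :: real
  assumes "\<And>t. a*t + b*t^2 \<le> 0"
  shows "a = 0"
proof (rule ccontr)
  assume "a \<noteq> 0"
  define B where "B = \<bar>b\<bar> + 1"
  have B: "B > 0" "\<bar>b\<bar> \<le> B - 1" unfolding B_def by auto
  have "a * (a/B) + b*(a/B)^2 \<le> 0" using assms by blast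
  moreover have "a * (a/B) + b*(a/B)^2 = a^2 * (B + b) / B^2"
    using B by (simp add: field_simps power2_eq_square)
  moreover have "a^2 * (B + b) / B^2 > 0"
    using B \<open>a \<noteq> 0\<close> by (intro divide_pos_pos mult_pos_pos) auto
  ultimately show False by linarith
qed

lemma quad_expand:
  fixes A :: "real^'n^'n"
  assumes "transpose A = A"
  shows "(u + t *\<^sub>R h) \<bullet> (A *v (u + t *\<^sub>R h)) = u \<bullet> (A *v u) + 2*t*(h \<bullet> (A *v u)) + t^2 * (h \<bullet> (A *v h))"
proof -
  have "(u + t *\<^sub>R h) \<bullet> (A *v (u + t *\<^sub>R h)) = u \<bullet> (A *v u) + t*(u \<bullet> (A *v h)) + t*(h \<bullet> (A *v u)) + t^2 * (h \<bullet> (A *v h))"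
    by (simp add: matrix_vector_right_distrib matrix_vector_mult_scaleR inner_add_left inner_add_right power2_eq_square algebra_simps)
  then show ?thesis using sym_dot[OF assms, of u h] by simp
qed

lemma q_scale: "(t *\<^sub>R v) \<bullet> ((A::real^'n^'n) *v (t *\<^sub>R v)) = t^2 * (v \<bullet> (A *v v))"
  by (simp add: matrix_vector_mult_scaleR power2_eq_square)

lemma rayleigh:
  fixes A :: "real^'n^'n"
  assumes sym: "transpose A = A"
  shows "\<exists>c u. u \<noteq> 0 \<and> A *v u = c *\<^sub>R u \<and> (\<forall>v. v \<bullet> (A *v v) \<le> c * (v \<bullet> v))"
proof -
  let ?q = "\<lambda>v::real^'n. v \<bullet> (A *v v)"
  have cont: "continuous_on (sphere 0 1) ?q"
    by (intro continuous_intros)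
  have ne: "sphere (0::real^'n) 1 \<noteq> {}"
    using norm_axis_1 by (metis mem_sphere_0 empty_iff)
  obtain u where u: "u \<in> sphere 0 1" and umax: "\<And>v. v \<in> sphere 0 1 \<Longrightarrow> ?q v \<le> ?q u"
    using continuous_attains_sup[OF compact_sphere ne cont] by blast
  define c where "c = ?q u"
  have nu: "norm u = 1" using u by simp
  have uu: "u \<bullet> u = 1" using nu by (simp add: dot_square_norm)
  have bound: "?q v \<le> c * (v \<bullet> v)" for v
  proof (cases "v = 0")
    case True then show ?thesis by simp
  next
    case False
    define s where "s = norm v"
    have s: "s > 0" using False s_def by simp
    have "(v /\<^sub>R s) \<in> sphere 0 1" using s s_def by simp
    then have "?q (v /\<^sub>R s) \<le> c" using umax c_def by blast
    moreover have "?q (v /\<^sub>R s) = (inverse s)^2 * ?q v"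
      by (rule q_scale)
    moreover have "v \<bullet> v = s^2" using s_def by (simp add: dot_square_norm)
    moreover have "?q v = s^2 * ((inverse s)^2 * ?q v)" using s by (simp add: field_simps)
    ultimately show ?thesis using s
      by (metis mult.commute mult_left_mono zero_le_power2)
  qed
  have var: "h \<bullet> (A *v u) - c * (h \<bullet> u) = 0" for h
  proof -
    have "2*(h \<bullet> (A *v u) - c * (h \<bullet> u)) * t + (?q h - c * (h \<bullet> h)) * t^2 \<le> 0" for t
    proof -
      have "?q (u + t *\<^sub>R h) \<le> c * ((u + t *\<^sub>R h) \<bullet> (u + t *\<^sub>R h))" by (rule bound)
      moreover have "(u + t *\<^sub>R h) \<bullet> (u + t *\<^sub>R h) = 1 + 2*t*(h \<bullet> u) + t^2 * (h \<bullet> h)"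
        using uu by (simp add: inner_add_left inner_add_right inner_commute power2_eq_square algebra_simps)
      ultimately have "c + 2*t*(h \<bullet> (A *v u)) + t^2 * ?q h \<le> c * (1 + 2*t*(h \<bullet> u) + t^2 * (h \<bullet> h))"
        unfolding quad_expand[OF sym] c_def by simp
      then show ?thesis by (simp add: algebra_simps)
    qed
    from quad_lin[OF this] show ?thesis by simp
  qed
  have "(A *v u - c *\<^sub>R u) \<bullet> (A *v u - c *\<^sub>R u) = 0"
    using var[of "A *v u - c *\<^sub>R u"] by (simp add: inner_diff_right)
  then have "A *v u = c *\<^sub>R u" by simp
  moreover have "u \<noteq> 0" using nu by auto
  ultimately show ?thesis using bound by blast
qed

lemma eig_finite:
  fixes A :: "real^'n^'n"
  assumes sym: "transpose A = A"
  shows "finite {l. is_eigenvalue A l}"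
proof -
  let ?S = "{l. is_eigenvalue A l}"
  define v where "v l = (SOME x. x \<noteq> 0 \<and> A *v x = l *\<^sub>R x)" for l
  have v: "v l \<noteq> 0 \<and> A *v v l = l *\<^sub>R v l" if "l \<in> ?S" for l
  proof -
    have "is_eigenvalue A l" using that by simp
    then obtain x where "x \<noteq> 0 \<and> A *v x = l *\<^sub>R x" unfolding is_eigenvalue_def by blast
    then show ?thesis unfolding v_def by (rule someI[where P="\<lambda>x. x \<noteq> 0 \<and> A *v x = l *\<^sub>R x"])
  qed
  have inj: "inj_on v ?S"
  proof (rule inj_onI)
    fix l1 l2 assume l: "l1 \<in> ?S" "l2 \<in> ?S" "v l1 = v l2"
    have "l1 *\<^sub>R v l1 = A *v v l1" using v[OF l(1)] by simp
    also have "\<dots> = A *v v l2" using l(3) by simp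
    also have "\<dots> = l2 *\<^sub>R v l2" using v[OF l(2)] by simp
    also have "\<dots> = l2 *\<^sub>R v l1" using l(3) by simp
    finally have "l1 *\<^sub>R v l1 = l2 *\<^sub>R v l1" .
    then show "l1 = l2" using v[OF l(1)] by simp
  qed
  have orth: "v l1 \<bullet> v l2 = 0" if l: "l1 \<in> ?S" "l2 \<in> ?S" "l1 \<noteq> l2" for l1 l2
  proof -
    have "l1 * (v l1 \<bullet> v l2) = (A *v v l1) \<bullet> v l2" using v[OF l(1)] by simp
    also have "\<dots> = v l2 \<bullet> (A *v v l1)" by (rule inner_commute)
    also have "\<dots> = v l1 \<bullet> (A *v v l2)" by (rule sym_dot[OF sym])
    also have "\<dots> = l2 * (v l1 \<bullet> v l2)" using v[OF l(2)] by simp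
    finally have "(l1 - l2) * (v l1 \<bullet> v l2) = 0" by (simp add: algebra_simps)
    then show ?thesis using l(3) by simp
  qed
  have "pairwise orthogonal (v ` ?S)"
    unfolding pairwise_def orthogonal_def using orth by blast
  then have "finite (v ` ?S)" by (rule pairwise_orthogonal_imp_finite)
  then show ?thesis using inj by (rule finite_imageD)
qed

lemma lambda_max_ge:
  fixes A :: "real^'n^'n"
  assumes sym: "transpose A = A"
  shows "\<exists>c. c \<le> lambda_max A \<and> (\<forall>v. v \<bullet> (A *v v) \<le> c * (v \<bullet> v)) \<and> (\<exists>u. u \<noteq> 0 \<and> A *v u = c *\<^sub>R u)"
proof -
  obtain c u where cu: "u \<noteq> 0" "A *v u = c *\<^sub>R u" "\<forall>v. v \<bullet> (A *v v) \<le> c * (v \<bullet> v)"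
    using rayleigh[OF sym] by blast
  have "is_eigenvalue A c" using cu unfolding is_eigenvalue_def by blast
  then have "c \<le> lambda_max A" unfolding lambda_max_def
    using eig_finite[OF sym] by (intro Max_ge) auto
  then show ?thesis using cu by blast
qed

lemma AA_bound:
  fixes A :: "real^'n^'n"
  assumes sym: "transpose A = A"
    and posdef: "\<And>x. x \<noteq> 0 \<Longrightarrow> x \<bullet> (A *v x) > 0"
  shows "(A *v e) \<bullet> (A *v e) \<le> lambda_max A * (e \<bullet> (A *v e))"
proof -
  obtain c u where c: "c \<le> lambda_max A" "\<forall>v. v \<bullet> (A *v v) \<le> c * (v \<bullet> v)"
    and u: "u \<noteq> 0" "A *v u = c *\<^sub>R u"
    using lambda_max_ge[OF sym] by blast
  have psd: "x \<bullet> (A *v x) \<ge> 0" for x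
    using posdef[of x] by (cases "x = 0") auto
  have "0 < u \<bullet> (A *v u)" using posdef u by blast
  also have "\<dots> = c * (u \<bullet> u)" using u by simp
  finally have cpos: "c > 0" using u by (smt (verit) inner_ge_zero zero_less_mult_iff)
  define w where "w = A *v e"
  have ee: "e \<bullet> (A *v e) \<ge> 0" by (rule psd)
  have "w \<bullet> w \<le> c * (e \<bullet> (A *v e))"
  proof (cases "e = 0")
    case True then show ?thesis by (simp add: w_def)
  next
    case False
    define a where "a = e \<bullet> (A *v e)"
    have a: "a > 0" using posdef[OF False] a_def by simp
    define m where "m = w \<bullet> (A *v e)"
    have m: "m = w \<bullet> w" unfolding m_def w_def ..
    define t where "t = - m / a"
    have "0 \<le> (w + t *\<^sub>R e) \<bullet> (A *v (w + t *\<^sub>R e))" by (rule psd)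
    also have "\<dots> = w \<bullet> (A *v w) + 2*t*m + t^2 * a"
      unfolding quad_expand[OF sym] m_def a_def
      using sym_dot[OF sym, of e w] by simp
    also have "\<dots> = w \<bullet> (A *v w) - m^2 / a"
      using a by (simp add: t_def field_simps power2_eq_square)
    finally have "m^2 \<le> (w \<bullet> (A *v w)) * a" using a by (simp add: field_simps)
    also have "\<dots> \<le> c * (w \<bullet> w) * a" using c(2) a by (simp add: mult_right_mono)
    finally have "(w \<bullet> w) * (w \<bullet> w) \<le> (c * a) * (w \<bullet> w)"
      unfolding m by (simp add: power2_eq_square algebra_simps)
    then show ?thesis
      using a_def a cpos by (cases "w \<bullet> w = 0") (auto simp: mult_le_cancel_right)
  qed
  also have "\<dots> \<le> lambda_max A * (e \<bullet> (A *v e))" using c(1) ee by (rule mult_right_mono)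
  finally show ?thesis unfolding w_def .
qed


lemma step_bound:
  fixes A :: "real^'n^'n"
  assumes sym: "transpose A = A" and diag: "\<And>i. A $ i $ i = 1"
  shows "A_inner A (e + t *\<^sub>R axis i 1) (e + t *\<^sub>R axis i 1) \<ge> A_inner A e e - ((A *v e) $ i)^2"
proof -
  have h1: "axis i 1 \<bullet> (A *v e) = (A *v e) $ i" by (simp add: inner_axis')
  have h2: "axis i 1 \<bullet> (A *v axis i (1::real)) = 1"
    using diag[of i] by (simp add: inner_axis' matrix_vector_mult_basis column_def)
  have "A_inner A (e + t *\<^sub>R axis i 1) (e + t *\<^sub>R axis i 1) = A_inner A e e + 2*t*((A *v e) $ i) + t^2"
    unfolding A_inner_def quad_expand[OF sym] h1 h2 by simp
  moreover have "0 \<le> (t + (A *v e) $ i)^2" by simp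
  ultimately show ?thesis by (simp add: power2_eq_square algebra_simps)
qed

lemma cr_dep:
  assumes "\<And>i. i < m \<Longrightarrow> d i = d' i" and khi: "\<And>j. k j \<le> j"
  shows "cr_iter A b \<beta> x0 k d m = cr_iter A b \<beta> x0 k d' m"
  using assms(1)
proof (induction m rule: less_induct)
  case (less m)
  show ?case
  proof (cases m)
    case 0 then show ?thesis by simp
  next
    case (Suc j)
    have a: "cr_iter A b \<beta> x0 k d j = cr_iter A b \<beta> x0 k d' j"
      using less Suc by auto
    have b: "cr_iter A b \<beta> x0 k d (min (k j) j) = cr_iter A b \<beta> x0 k d' (min (k j) j)"
      using less Suc by auto
    have c: "d j = d' j" using less Suc by auto
    show ?thesis unfolding Suc cr_iter.simps a b c ..
  qed
qed

lemma E_pair: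
  assumes fin: "finite (set_pmf Q)"
  shows "measure_pmf.expectation (pair_pmf (pmf_of_set (UNIV::'n::finite set)) Q) h
     = (\<Sum>f\<in>set_pmf Q. pmf Q f * (\<Sum>y\<in>UNIV. h (y,f)) / real CARD('n))"
proof -
  let ?U = "pmf_of_set (UNIV::'n set)"
  have "measure_pmf.expectation (pair_pmf ?U Q) h = (\<Sum>z\<in>UNIV \<times> set_pmf Q. h z * pmf (pair_pmf ?U Q) z)"
    using fin by (intro integral_measure_pmf_real) auto
  also have "\<dots> = (\<Sum>(y,f)\<in>UNIV \<times> set_pmf Q. h (y,f) * (pmf Q f / real CARD('n)))"
    by (intro sum.cong refl) (auto simp: pmf_pair)
  also have "\<dots> = (\<Sum>y\<in>UNIV. \<Sum>f\<in>set_pmf Q. h (y,f) * (pmf Q f / real CARD('n)))"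
    by (rule sum.cartesian_product[symmetric])
  also have "\<dots> = (\<Sum>f\<in>set_pmf Q. \<Sum>y\<in>UNIV. h (y,f) * (pmf Q f / real CARD('n)))"
    by (rule sum.swap)
  also have "\<dots> = (\<Sum>f\<in>set_pmf Q. pmf Q f * (\<Sum>y\<in>UNIV. h (y,f)) / real CARD('n))"
    by (simp add: sum_distrib_left sum_distrib_right sum_divide_distrib mult.commute)
  finally show ?thesis .
qed


theorem mainTheorem6:
  fixes A :: "real^'n^'n" and b x0 :: "real^'n" and \<beta> :: real
    and \<tau> :: nat and k :: "nat \<Rightarrow> nat"
  assumes n2: "CARD('n) \<ge> 2"
    and sym: "transpose A = A"
    and posdef: "\<And>x. x \<noteq> 0 \<Longrightarrow> x \<bullet> (A *v x) > 0"
    and diag: "\<And>i. A $ i $ i = 1"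
    and k_lo: "\<And>j. int j - int \<tau> \<le> int (k j)"
    and k_hi: "\<And>j. k j \<le> j"
  shows "cr_err A b \<beta> x0 k (Suc j) \<ge> (1 - lambda_max A / real CARD('n)) * cr_err A b \<beta> x0 k j"
proof -
  let ?U = "pmf_of_set (UNIV::'n set)"
  define P where "P m = Pi_pmf {..<m} undefined (\<lambda>_::nat. ?U)" for m
  define xs where "xs = matrix_inv A *v b"
  define X where "X d m = cr_iter A b \<beta> x0 k d m" for d m
  define F where "F m d = A_inner A (X d m - xs) (X d m - xs)" for m d
  define n where "n = real CARD('n)"
  define L where "L = lambda_max A"
  have npos: "n > 0" unfolding n_def by simp
  have err: "cr_err A b \<beta> x0 k m = measure_pmf.expectation (P m) (F m)" for m
    unfolding cr_err_def P_def F_def X_def xs_def Let_def ..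
  have fin: "finite (set_pmf (P m))" for m
  proof -
    have "set_pmf (P m) \<subseteq> PiE_dflt {..<m} undefined (set_pmf \<circ> (\<lambda>_. ?U))"
      unfolding P_def by (rule set_Pi_pmf_subset') simp
    moreover have "finite (PiE_dflt {..<m} undefined (set_pmf \<circ> (\<lambda>_. ?U)))"
      by (intro finite_PiE_dflt) auto
    ultimately show ?thesis by (rule finite_subset)
  qed
  have Fnn: "F m d \<ge> 0" for m d
    unfolding F_def A_inner_def using posdef[of "X d m - xs"] by (cases "X d m - xs = 0") auto
  have PSuc: "P (Suc j) = map_pmf (\<lambda>(y,f). f(j:=y)) (pair_pmf ?U (P j))"
    unfolding P_def lessThan_Suc by (rule Pi_pmf_insert) auto
  have Ej: "cr_err A b \<beta> x0 k j = (\<Sum>f\<in>set_pmf (P j). pmf (P j) f * F j f)"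
    unfolding err using fin[of j] by (subst integral_measure_pmf_real[of "set_pmf (P j)"]) (auto simp: mult.commute)
  have ESuc: "cr_err A b \<beta> x0 k (Suc j) = (\<Sum>f\<in>set_pmf (P j). pmf (P j) f * (\<Sum>y\<in>UNIV. F (Suc j) (f(j:=y))) / n)"
    unfolding err PSuc integral_map_pmf n_def
    by (subst E_pair[OF fin]) (simp add: case_prod_beta)
  have key: "(\<Sum>y\<in>UNIV. F (Suc j) (f(j:=y))) / n \<ge> (1 - L / n) * F j f" for f
  proof -
    define e where "e = X f j - xs"
    have Xj: "X (f(j:=y)) j = X f j" for y
      unfolding X_def by (rule cr_dep) (auto simp: k_hi)
    have "F (Suc j) (f(j:=y)) \<ge> F j f - ((A *v e) $ y)^2" for y
    proof -
      obtain t where t: "X (f(j:=y)) (Suc j) - xs = e + t *\<^sub>R axis y 1"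
        unfolding X_def e_def by (simp add: Xj[unfolded X_def] algebra_simps)
      have "F (Suc j) (f(j:=y)) = A_inner A (e + t *\<^sub>R axis y 1) (e + t *\<^sub>R axis y 1)"
        unfolding F_def t ..
      moreover have "F j f = A_inner A e e" unfolding F_def e_def ..
      ultimately show ?thesis using step_bound[OF sym diag, where e=e and t=t and i=y] by simp
    qed
    then have s1: "(\<Sum>y\<in>UNIV. F (Suc j) (f(j:=y))) \<ge> (\<Sum>y\<in>UNIV. F j f - ((A *v e) $ y)^2)"
      by (intro sum_mono)
    have s2: "(\<Sum>y\<in>UNIV. F j f - ((A *v e) $ y)^2) = n * F j f - (A *v e) \<bullet> (A *v e)"
      by (simp add: sum_subtractf n_def inner_vec_def power2_eq_square)
    have s3: "(A *v e) \<bullet> (A *v e) \<le> L * F j f"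
      using AA_bound[OF sym posdef, of e] unfolding L_def F_def A_inner_def e_def .
    have "(\<Sum>y\<in>UNIV. F (Suc j) (f(j:=y))) \<ge> n * F j f - L * F j f" using s1 s2 s3 by linarith
    then have "(n * F j f - L * F j f) / n \<le> (\<Sum>y\<in>UNIV. F (Suc j) (f(j:=y))) / n"
      using npos by (intro divide_right_mono) auto
    moreover have "(1 - L / n) * F j f = (n * F j f - L * F j f) / n" using npos by (simp add: field_simps)
    ultimately show ?thesis by simp
  qed
  have "(1 - L / n) * cr_err A b \<beta> x0 k j = (\<Sum>f\<in>set_pmf (P j). pmf (P j) f * ((1 - L / n) * F j f))"
    unfolding Ej by (simp add: sum_distrib_left algebra_simps)
  also have "\<dots> \<le> (\<Sum>f\<in>set_pmf (P j). pmf (P j) f * ((\<Sum>y\<in>UNIV. F (Suc j) (f(j:=y))) / n))"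
    by (intro sum_mono mult_left_mono key) simp
  also have "\<dots> = cr_err A b \<beta> x0 k (Suc j)" unfolding ESuc by simp
  finally show ?thesis unfolding L_def n_def .
qed

end
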